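(* Let $\mathfrak{H}$ be a separable Hilbert space, $(\gamma^{(k)})_{k\in\mathbb{N}}\in\mathscr{H}(\mathfrak{H})$, and let $\mu$ be the $U(1)$-invariant Borel probability measure on $X_1=B_{\mathfrak{H}}(0,1)$ with $\gamma^{(k)}=\int_{X_1}|\varphi^{\otimes k}\rangle\langle\varphi^{\otimes k}|d\mu(\varphi)$ for all $k$. Then $\mathrm{Tr}_{k+1}[\gamma^{(k+1)}]=\gamma^{(k)}$ for all $k\in\mathbb{N}$ if and only if $\mu(\{0\}\cup S_{\mathfrak{H}}(0,1))=1$.
   Context: $\mathscr{H}(\mathfrak{H})$ is the set of sequences $(\gamma^{(k)})_{k\in\mathbb{N}}$, $\gamma^{(k)}$ trace class on the symmetric tensor product $\vee^k\mathfrak{H}$, of the form $\gamma^{(k)}=\int_{X_1}|\varphi^{\otimes k}\rangle\langle\varphi^{\otimes k}|d\mu(\varphi)$ for a (unique) $U(1)$-invariant Borel probability measure $\mu$ on the closed unit ball $X_1$ (equivalently, weak-$*$ subsequential limits of reduced density matrices of normal states on $\vee^n\mathfrak{H}$). $\mathrm{Tr}_{k+1}$ denotes the partial trace over the last tensor factor. $S_{\mathfrak{H}}(0,1)$ is the unit sphere. *)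

theory Defs
  imports "HOL-Probability.Probability"
begin

text \<open>The separable Hilbert space is realised concretely as l2(I) over a countable
  index type 'i (the Hilbert basis), vectors being square-summable functions
  'i \<Rightarrow> complex.\<close>

definition l2 :: "('i \<Rightarrow> complex) set" where
  "l2 = {x. (\<lambda>i. (cmod (x i))\<^sup>2) summable_on UNIV}"

definition l2norm :: "('i \<Rightarrow> complex) \<Rightarrow> real" where
  "l2norm x = sqrt (\<Sum>\<^sub>\<infinity>i. (cmod (x i))\<^sup>2)"

definition l2_open :: "('i \<Rightarrow> complex) set \<Rightarrow> bool" where
  "l2_open U \<longleftrightarrow> U \<subseteq> l2 \<and>
     (\<forall>x\<in>U. \<exists>e>0. \<forall>y\<in>l2. l2norm (y - x) < e \<longrightarrow> y \<in> U)"

definition unit_ball :: "('i \<Rightarrow> complex) set" where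
  "unit_ball = {x \<in> l2. l2norm x \<le> 1}"

definition unit_sphere :: "('i \<Rightarrow> complex) set" where
  "unit_sphere = {x \<in> l2. l2norm x = 1}"

definition borel_X1 :: "('i \<Rightarrow> complex) measure" where
  "borel_X1 = sigma unit_ball {unit_ball \<inter> U | U. l2_open U}"

definition U1_invariant :: "('i \<Rightarrow> complex) measure \<Rightarrow> bool" where
  "U1_invariant \<mu> \<longleftrightarrow> (\<forall>\<theta>::real. \<forall>A\<in>sets \<mu>.
     emeasure \<mu> ((\<lambda>x. (\<lambda>i. cis \<theta> * x i)) -` A \<inter> space \<mu>) = emeasure \<mu> A)"

text \<open>Matrix element <e_is, gamma^(k) e_js> (k = length is = length js) of
  gamma^(k) = integral of |phi^{\<otimes>k}><phi^{\<otimes>k}| d\<mu>(phi),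
  w.r.t. the product basis e_{i_1} \<otimes> ... \<otimes> e_{i_k} of the k-fold tensor product.\<close>
definition dm_gamma :: "('i \<Rightarrow> complex) measure \<Rightarrow> 'i list \<Rightarrow> 'i list \<Rightarrow> complex" where
  "dm_gamma \<mu> is js =
     (LINT \<phi>|\<mu>. prod_list (map \<phi> is) * prod_list (map (\<lambda>j. cnj (\<phi> j)) js))"

text \<open>Tr_{k+1}[gamma^(k+1)] = gamma^(k), in matrix elements: partial trace over
  the last factor.\<close>
definition partial_trace_consistent :: "('i \<Rightarrow> complex) measure \<Rightarrow> nat \<Rightarrow> bool" where
  "partial_trace_consistent \<mu> k \<longleftrightarrow>
     (\<forall>is js. length is = k \<longrightarrow> length js = k \<longrightarrow>
        ((\<lambda>m. dm_gamma \<mu> (is @ [m]) (js @ [m])) has_sum dm_gamma \<mu> is js) UNIV)"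

end

theory Submission
  imports Defs
begin


definition Nrm :: "('i \<Rightarrow> complex) \<Rightarrow> real" where
  "Nrm x = (\<Sum>\<^sub>\<infinity>i. (cmod (x i))\<^sup>2)"

lemma l2_diff:
  assumes "x \<in> l2" "y \<in> l2" shows "x - y \<in> l2"
proof -
  have s: "(\<lambda>i. 2 * (cmod (x i))\<^sup>2 + 2 * (cmod (y i))\<^sup>2) summable_on UNIV"
    using assms unfolding l2_def
    by (intro summable_on_add summable_on_cmult_right) auto
  have "(cmod (x i - y i))\<^sup>2 \<le> 2 * (cmod (x i))\<^sup>2 + 2 * (cmod (y i))\<^sup>2" for i
  proof -
    have "cmod (x i - y i) \<le> cmod (x i) + cmod (y i)" by (rule norm_triangle_ineq4)
    hence "(cmod (x i - y i))\<^sup>2 \<le> (cmod (x i) + cmod (y i))\<^sup>2"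
      by (intro power_mono) auto
    also have "\<dots> \<le> 2 * (cmod (x i))\<^sup>2 + 2 * (cmod (y i))\<^sup>2"
      by (smt (verit) sum_squares_bound power2_sum)
    finally show ?thesis .
  qed
  then show ?thesis unfolding l2_def
    by (auto intro!: summable_on_comparison_test[OF s])
qed

lemma Nrm_nonneg: "Nrm x \<ge> 0"
  unfolding Nrm_def by (intro infsum_nonneg) auto

lemma coord_le_Nrm:
  assumes "x \<in> l2" shows "(cmod (x i))\<^sup>2 \<le> Nrm x"
proof -
  have "sum (\<lambda>i. (cmod (x i))\<^sup>2) {i} \<le> Nrm x"
    unfolding Nrm_def using assms unfolding l2_def
    by (intro finite_sum_le_infsum) auto
  thus ?thesis by simp
qed

lemma l2norm_Nrm: "l2norm x = sqrt (Nrm x)"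
  unfolding l2norm_def Nrm_def ..

lemma coord_le_l2norm:
  assumes "x \<in> l2" shows "cmod (x i) \<le> l2norm x"
  unfolding l2norm_Nrm using coord_le_Nrm[OF assms] by (simp add: real_le_rsqrt)

lemma unit_ball_Nrm: "x \<in> unit_ball \<Longrightarrow> Nrm x \<le> 1"
  unfolding unit_ball_def l2norm_Nrm by auto

lemma space_borel_X1: "space borel_X1 = unit_ball"
  unfolding borel_X1_def by (rule space_measure_of) auto

lemma sets_borel_X1: "sets borel_X1 = sigma_sets unit_ball {unit_ball \<inter> U | U. l2_open U}"
  unfolding borel_X1_def by (rule sets_measure_of) auto

lemma coord_meas: "(\<lambda>x. x i) \<in> borel_measurable borel_X1"
proof (rule borel_measurableI)
  fix S :: "complex set" assume S: "open S"
  define U where "U = {y \<in> l2. y i \<in> S}"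
  have "l2_open U"
    unfolding l2_open_def
  proof (intro conjI ballI)
    show "U \<subseteq> l2" unfolding U_def by auto
    fix x assume x: "x \<in> U"
    then obtain e where e: "e > 0" "ball (x i) e \<subseteq> S"
      using S unfolding U_def by (auto simp: open_contains_ball)
    show "\<exists>e>0. \<forall>y\<in>l2. l2norm (y - x) < e \<longrightarrow> y \<in> U"
    proof (intro exI[of _ e] conjI ballI impI)
      fix y assume y: "y \<in> l2" "l2norm (y - x) < e"
      have "x \<in> l2" using x unfolding U_def by auto
      have "cmod ((y - x) i) \<le> l2norm (y - x)"
        by (rule coord_le_l2norm[OF l2_diff[OF y(1) \<open>x \<in> l2\<close>]])
      hence "dist (x i) (y i) < e" using y by (simp add: dist_norm norm_minus_commute)
      thus "y \<in> U" using e y unfolding U_def by auto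
    qed (use e in auto)
  qed
  moreover have "(\<lambda>x. x i) -` S \<inter> space borel_X1 = unit_ball \<inter> U"
    unfolding space_borel_X1 U_def unit_ball_def by auto
  ultimately show "(\<lambda>x. x i) -` S \<inter> space borel_X1 \<in> sets borel_X1"
    unfolding sets_borel_X1 by (auto intro!: sigma_sets.Basic)
qed

lemma nn_integral_count_meas:
  fixes f :: "'i \<Rightarrow> 'a \<Rightarrow> ennreal"
  assumes "countable I" and [measurable]: "\<And>i. i \<in> I \<Longrightarrow> f i \<in> borel_measurable M"
  shows "(\<lambda>x. \<integral>\<^sup>+i. f i x \<partial>count_space I) \<in> borel_measurable M"
proof cases
  assume "finite I" then show ?thesis
    by (simp add: nn_integral_count_space_finite)
next
  assume "infinite I"
  then have [simp]: "I \<noteq> {}"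
    by auto
  note * = bij_betw_from_nat_into[OF \<open>countable I\<close> \<open>infinite I\<close>]
  have **: "\<And>f. (\<And>i. 0 \<le> f i) \<Longrightarrow> (\<integral>\<^sup>+i. f i \<partial>count_space I) = (\<Sum>n. f (from_nat_into I n))"
    by (simp add: nn_integral_bij_count_space[symmetric, OF *] nn_integral_count_space_nat)
  show ?thesis
    by (simp add: ** from_nat_into)
qed

lemma has_sum_from_nn:
  fixes a :: "'i \<Rightarrow> real"
  assumes "\<And>m. a m \<ge> 0" "(\<integral>\<^sup>+m. ennreal (a m) \<partial>count_space UNIV) = ennreal c" "c \<ge> 0"
  shows "(a has_sum c) UNIV"
proof -
  have as: "Infinite_Set_Sum.abs_summable_on a UNIV"
    unfolding abs_summable_on_def
    by (rule integrableI_nonneg) (use assms in auto)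
  hence "Infinite_Sum.abs_summable_on a UNIV" using abs_summable_equivalent by blast
  hence sm: "a summable_on UNIV" using assms(1) by simp
  have "infsetsum a UNIV = c"
    using assms by (subst infsetsum_conv_nn_integral) auto
  hence "infsum a UNIV = c" using infsetsum_infsum[OF as] by simp
  thus ?thesis using sm has_sum_iff by blast
qed

lemma Nrm_nn:
  assumes "x \<in> l2"
  shows "ennreal (Nrm x) = (\<integral>\<^sup>+i. ennreal ((cmod (x i))\<^sup>2) \<partial>count_space UNIV)"
proof -
  have sm: "(\<lambda>i. (cmod (x i))\<^sup>2) summable_on UNIV" using assms unfolding l2_def by auto
  hence "Infinite_Sum.abs_summable_on (\<lambda>i. (cmod (x i))\<^sup>2) UNIV" by simp
  hence as: "Infinite_Set_Sum.abs_summable_on (\<lambda>i. (cmod (x i))\<^sup>2) UNIV" using abs_summable_equivalent by blast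
  show ?thesis
    unfolding Nrm_def
    by (subst nn_integral_conv_infsetsum[OF as]) (auto simp: infsetsum_infsum[OF as])
qed



lemma space_mu:
  assumes "sets \<mu> = sets borel_X1" shows "space \<mu> = unit_ball"
  using sets_eq_imp_space_eq[OF assms] space_borel_X1 by simp

lemma coord_meas_mu:
  assumes "sets \<mu> = sets borel_X1" shows "(\<lambda>x. x i) \<in> borel_measurable \<mu>"
  by (subst measurable_cong_sets[OF assms refl]) (rule coord_meas)

lemma sq_meas:
  assumes "sets \<mu> = sets borel_X1" shows "(\<lambda>x. (cmod (x m))\<^sup>2) \<in> borel_measurable \<mu>"
  by (rule borel_measurable_power[OF measurable_compose[OF coord_meas_mu[OF assms] borel_measurable_norm]])

lemma Nrm_meas:
  fixes \<mu> :: "('i::countable \<Rightarrow> complex) measure"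
  assumes S: "sets \<mu> = sets borel_X1" shows "Nrm \<in> borel_measurable \<mu>"
proof -
  have m: "(\<lambda>x. \<integral>\<^sup>+i. ennreal ((cmod (x i))\<^sup>2) \<partial>count_space UNIV) \<in> borel_measurable \<mu>"
    by (rule nn_integral_count_meas[OF countableI_type measurable_compose[OF sq_meas[OF S] measurable_ennreal]])
  have m2: "(\<lambda>x. enn2real (\<integral>\<^sup>+i. ennreal ((cmod (x i))\<^sup>2) \<partial>count_space UNIV)) \<in> borel_measurable \<mu>"
    by (rule borel_measurable_enn2real[OF m])
  have eq: "x \<in> space \<mu> \<Longrightarrow> enn2real (\<integral>\<^sup>+i. ennreal ((cmod (x i))\<^sup>2) \<partial>count_space UNIV) = Nrm x" for x
  proof -
    assume "x \<in> space \<mu>"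
    hence "x \<in> l2" using space_mu[OF S] unfolding unit_ball_def by auto
    from Nrm_nn[OF this] show ?thesis using Nrm_nonneg[of x] by (metis enn2real_ennreal)
  qed
  show ?thesis using measurable_cong[of \<mu> _ Nrm, OF eq] m2 by simp
qed

lemma bounded_integrable:
  fixes f :: "_ \<Rightarrow> 'b::{banach,second_countable_topology}"
  assumes "prob_space \<mu>" "f \<in> borel_measurable \<mu>" "\<And>x. x \<in> space \<mu> \<Longrightarrow> norm (f x) \<le> B"
  shows "integrable \<mu> f"
proof -
  interpret prob_space \<mu> by fact
  show ?thesis using assms(2,3) by (intro integrable_const_bound[where B=B] AE_I2) auto
qed

lemma weighted_sum:
  fixes \<mu> :: "('i::countable \<Rightarrow> complex) measure"
  assumes P: "prob_space \<mu>" and S: "sets \<mu> = sets borel_X1"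
    and wm[measurable]: "w \<in> borel_measurable \<mu>" and w: "\<And>x. x \<in> space \<mu> \<Longrightarrow> 0 \<le> w x \<and> w x \<le> 1"
  shows "((\<lambda>m. \<integral>x. w x * (cmod (x m))\<^sup>2 \<partial>\<mu>) has_sum (\<integral>x. w x * Nrm x \<partial>\<mu>)) UNIV"
proof -
  have m1: "(\<lambda>x. w x * Nrm x) \<in> borel_measurable \<mu>"
    by (rule borel_measurable_times[OF wm Nrm_meas[OF S]])
  have m2: "(\<lambda>x. w x * (cmod (x m))\<^sup>2) \<in> borel_measurable \<mu>" for m
    by (rule borel_measurable_times[OF wm sq_meas[OF S]])
  have m3: "(\<lambda>x. ennreal (w x * (cmod (x m))\<^sup>2)) \<in> borel_measurable \<mu>" for m
    by (rule measurable_compose[OF m2 measurable_ennreal])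
  have w0: "x \<in> space \<mu> \<Longrightarrow> 0 \<le> w x" for x using w by blast
  have sp: "x \<in> space \<mu> \<Longrightarrow> x \<in> l2 \<and> Nrm x \<le> 1" for x
    using space_mu[OF S] unit_ball_Nrm unfolding unit_ball_def by auto
  have int1: "integrable \<mu> (\<lambda>x. w x * Nrm x)"
  proof (rule bounded_integrable[OF P, where B=1])
    fix x assume x: "x \<in> space \<mu>"
    show "norm (w x * Nrm x) \<le> 1" using w[OF x] sp[OF x] Nrm_nonneg[of x]
      by (auto simp: abs_mult intro: mult_le_one)
  qed (rule m1)
  have int2: "integrable \<mu> (\<lambda>x. w x * (cmod (x m))\<^sup>2)" for m
  proof (rule bounded_integrable[OF P, where B=1])
    fix x assume x: "x \<in> space \<mu>"
    have "(cmod (x m))\<^sup>2 \<le> 1" using coord_le_Nrm[of x m] sp[OF x] by auto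
    thus "norm (w x * (cmod (x m))\<^sup>2) \<le> 1" using w[OF x]
      by (auto simp: abs_mult intro: mult_le_one)
  qed (rule m2)
  have T: "(\<integral>\<^sup>+x. \<integral>\<^sup>+m. ennreal (w x * (cmod (x m))\<^sup>2) \<partial>count_space UNIV \<partial>\<mu>) =
      (\<integral>\<^sup>+m. \<integral>\<^sup>+x. ennreal (w x * (cmod (x m))\<^sup>2) \<partial>\<mu> \<partial>count_space UNIV)"
    by (rule nn_integral_count_space_nn_integral) (auto intro: m3)
  have "(\<integral>\<^sup>+x. \<integral>\<^sup>+m. ennreal (w x * (cmod (x m))\<^sup>2) \<partial>count_space UNIV \<partial>\<mu>) =
        (\<integral>\<^sup>+x. ennreal (w x * Nrm x) \<partial>\<mu>)"
  proof (rule nn_integral_cong)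
    fix x assume x: "x \<in> space \<mu>"
    have "(\<integral>\<^sup>+m. ennreal (w x * (cmod (x m))\<^sup>2) \<partial>count_space UNIV) =
          (\<integral>\<^sup>+m. ennreal (w x) * ennreal ((cmod (x m))\<^sup>2) \<partial>count_space UNIV)"
      using w[OF x] by (simp add: ennreal_mult)
    also have "\<dots> = ennreal (w x) * (\<integral>\<^sup>+m. ennreal ((cmod (x m))\<^sup>2) \<partial>count_space UNIV)"
      by (rule nn_integral_cmult) auto
    also have "\<dots> = ennreal (w x * Nrm x)"
      using Nrm_nn[of x, symmetric] sp[OF x] w[OF x] Nrm_nonneg[of x] by (simp add: ennreal_mult)
    finally show "(\<integral>\<^sup>+m. ennreal (w x * (cmod (x m))\<^sup>2) \<partial>count_space UNIV) = ennreal (w x * Nrm x)" .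
  qed
  also have "\<dots> = ennreal (\<integral>x. w x * Nrm x \<partial>\<mu>)"
    by (rule nn_integral_eq_integral[OF int1]) (simp add: AE_I2 w0 Nrm_nonneg)
  finally have L: "(\<integral>\<^sup>+m. \<integral>\<^sup>+x. ennreal (w x * (cmod (x m))\<^sup>2) \<partial>\<mu> \<partial>count_space UNIV)
     = ennreal (\<integral>x. w x * Nrm x \<partial>\<mu>)" using T by simp
  have R: "(\<integral>\<^sup>+x. ennreal (w x * (cmod (x m))\<^sup>2) \<partial>\<mu>) = ennreal (\<integral>x. w x * (cmod (x m))\<^sup>2 \<partial>\<mu>)" for m
    by (rule nn_integral_eq_integral[OF int2]) (simp add: AE_I2 w0)
  show ?thesis
  proof (rule has_sum_from_nn)
    show "(\<integral>\<^sup>+m. ennreal (\<integral>x. w x * (cmod (x m))\<^sup>2 \<partial>\<mu>) \<partial>count_space UNIV) = ennreal (\<integral>x. w x * Nrm x \<partial>\<mu>)"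
      using L R by simp
    show "0 \<le> (\<integral>x. w x * Nrm x \<partial>\<mu>)" by (intro integral_nonneg_AE AE_I2) (simp add: w0 Nrm_nonneg)
    show "0 \<le> (\<integral>x. w x * (cmod (x m))\<^sup>2 \<partial>\<mu>)" for m by (intro integral_nonneg_AE AE_I2) (simp add: w0)
  qed
qed



lemma Nrm_zero_iff:
  assumes "x \<in> l2" shows "Nrm x = 0 \<longleftrightarrow> x = (\<lambda>_. 0)"
proof
  assume "Nrm x = 0"
  hence "(cmod (x i))\<^sup>2 \<le> 0" for i using coord_le_Nrm[OF assms, of i] by simp
  thus "x = (\<lambda>_. 0)" by (auto simp: fun_eq_iff)
qed (simp add: Nrm_def)

lemma zero_l2: "(\<lambda>_. 0) \<in> l2"
  unfolding l2_def by simp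

lemma A_eq:
  assumes S: "sets \<mu> = sets borel_X1"
  shows "{\<lambda>_. 0} \<union> unit_sphere = {x \<in> space \<mu>. Nrm x = 0 \<or> Nrm x = 1}"
proof -
  have "x \<in> unit_sphere \<longleftrightarrow> x \<in> unit_ball \<and> Nrm x = 1" for x
    using Nrm_nonneg[of x] unfolding unit_sphere_def unit_ball_def l2norm_Nrm by auto
  moreover have "(\<lambda>_. 0) \<in> unit_ball" "Nrm (\<lambda>_. 0) = 0"
    using zero_l2 unfolding unit_ball_def l2norm_Nrm by (auto simp: Nrm_def)
  moreover have "x \<in> unit_ball \<Longrightarrow> Nrm x = 0 \<Longrightarrow> x = (\<lambda>_. 0)" for x
    using Nrm_zero_iff unfolding unit_ball_def by auto
  ultimately show ?thesis unfolding space_mu[OF S] by auto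
qed

lemma A_sets:
  fixes \<mu> :: "('i::countable \<Rightarrow> complex) measure"
  assumes S: "sets \<mu> = sets borel_X1"
  shows "{x \<in> space \<mu>. Nrm x = 0 \<or> Nrm x = 1} \<in> sets \<mu>"
proof -
  have "{x \<in> space \<mu>. Nrm x = 0 \<or> Nrm x = 1} = Nrm -` {0, 1} \<inter> space \<mu>" by auto
  moreover have "Nrm -` {0, 1} \<inter> space \<mu> \<in> sets \<mu>"
    by (rule measurable_sets[OF Nrm_meas[OF S]]) (simp add: borel_closed)
  ultimately show ?thesis by simp
qed

lemma dm1:
  "dm_gamma \<mu> [i] [i] = complex_of_real (\<integral>x. (cmod (x i))\<^sup>2 \<partial>\<mu>)"
proof -
  have "dm_gamma \<mu> [i] [i] = (\<integral>x. complex_of_real ((cmod (x i))\<^sup>2) \<partial>\<mu>)"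
    unfolding dm_gamma_def by (simp del: of_real_power add: complex_norm_square)
  thus ?thesis by (simp only: integral_complex_of_real)
qed

lemma dm2:
  "dm_gamma \<mu> [i, m] [i, m] = complex_of_real (\<integral>x. (cmod (x i))\<^sup>2 * (cmod (x m))\<^sup>2 \<partial>\<mu>)"
proof -
  have "dm_gamma \<mu> [i, m] [i, m] = (\<integral>x. complex_of_real ((cmod (x i))\<^sup>2 * (cmod (x m))\<^sup>2) \<partial>\<mu>)"
    unfolding dm_gamma_def by (simp del: of_real_power add: complex_norm_square mult_ac)
  thus ?thesis by (simp only: integral_complex_of_real)
qed

lemma forward:
  fixes \<mu> :: "('i::countable \<Rightarrow> complex) measure"
  assumes P: "prob_space \<mu>" and S: "sets \<mu> = sets borel_X1"
    and h: "partial_trace_consistent \<mu> 1"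
  shows "emeasure \<mu> ({\<lambda>_. 0} \<union> unit_sphere) = 1"
proof -
  interpret prob_space \<mu> by fact
  have sp: "x \<in> space \<mu> \<Longrightarrow> x \<in> l2 \<and> Nrm x \<le> 1" for x
    using space_mu[OF S] unit_ball_Nrm unfolding unit_ball_def by auto
  have sq1: "x \<in> space \<mu> \<Longrightarrow> (cmod (x i))\<^sup>2 \<le> 1" for x i
    by (meson order_trans sp coord_le_Nrm)
  have Nm: "Nrm \<in> borel_measurable \<mu>" by (rule Nrm_meas[OF S])
  have eq1: "(\<integral>x. (cmod (x i))\<^sup>2 \<partial>\<mu>) = (\<integral>x. Nrm x * (cmod (x i))\<^sup>2 \<partial>\<mu>)" for i
  proof -
    have "((\<lambda>m. dm_gamma \<mu> ([i] @ [m]) ([i] @ [m])) has_sum dm_gamma \<mu> [i] [i]) UNIV"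
      by (rule h[unfolded partial_trace_consistent_def, rule_format]) simp_all
    hence "((\<lambda>m. complex_of_real (\<integral>x. (cmod (x i))\<^sup>2 * (cmod (x m))\<^sup>2 \<partial>\<mu>)) has_sum
          complex_of_real (\<integral>x. (cmod (x i))\<^sup>2 \<partial>\<mu>)) UNIV"
      by (simp add: dm1 dm2)
    hence a: "((\<lambda>m. (\<integral>x. (cmod (x i))\<^sup>2 * (cmod (x m))\<^sup>2 \<partial>\<mu>)) has_sum
          (\<integral>x. (cmod (x i))\<^sup>2 \<partial>\<mu>)) UNIV"
      by (simp only: has_sum_of_real_iff)
    have b: "((\<lambda>m. (\<integral>x. (cmod (x i))\<^sup>2 * (cmod (x m))\<^sup>2 \<partial>\<mu>)) has_sum
          (\<integral>x. (cmod (x i))\<^sup>2 * Nrm x \<partial>\<mu>)) UNIV"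
      by (rule weighted_sum[OF P S sq_meas[OF S]]) (use sq1 in auto)
    show ?thesis using has_sum_unique[OF a b] by (simp add: mult.commute)
  qed
  have c: "((\<lambda>i. \<integral>x. 1 * (cmod (x i))\<^sup>2 \<partial>\<mu>) has_sum (\<integral>x. 1 * Nrm x \<partial>\<mu>)) UNIV"
    by (rule weighted_sum[OF P S]) auto
  have d: "((\<lambda>i. \<integral>x. Nrm x * (cmod (x i))\<^sup>2 \<partial>\<mu>) has_sum (\<integral>x. Nrm x * Nrm x \<partial>\<mu>)) UNIV"
    by (rule weighted_sum[OF P S Nm]) (use sp Nrm_nonneg in auto)
  have "(\<integral>x. Nrm x \<partial>\<mu>) = (\<integral>x. Nrm x * Nrm x \<partial>\<mu>)"
    using has_sum_unique[OF c[simplified] d[folded eq1]] by simp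
  have intN: "integrable \<mu> Nrm"
    by (rule bounded_integrable[OF P Nm, where B=1]) (simp add: abs_of_nonneg[OF Nrm_nonneg] sp)
  have intNN: "integrable \<mu> (\<lambda>x. Nrm x * Nrm x)"
    by (rule bounded_integrable[OF P borel_measurable_times[OF Nm Nm], where B=1])
       (use sp Nrm_nonneg in \<open>auto intro: mult_le_one simp: abs_mult\<close>)
  have "(\<integral>x. Nrm x - Nrm x * Nrm x \<partial>\<mu>) = 0"
    using \<open>(\<integral>x. Nrm x \<partial>\<mu>) = _\<close> by (simp add: Bochner_Integration.integral_diff[OF intN intNN])
  moreover have nn: "AE x in \<mu>. 0 \<le> Nrm x - Nrm x * Nrm x"
  proof (rule AE_I2)
    fix x assume "x \<in> space \<mu>"
    thus "0 \<le> Nrm x - Nrm x * Nrm x" using sp[of x] Nrm_nonneg[of x]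
      by (simp add: mult_left_le)
  qed
  ultimately have "AE x in \<mu>. Nrm x - Nrm x * Nrm x = 0"
    using integral_nonneg_eq_0_iff_AE[OF Bochner_Integration.integrable_diff[OF intN intNN] nn] by simp
  hence "AE x in \<mu>. x \<in> {x \<in> space \<mu>. Nrm x = 0 \<or> Nrm x = 1}"
  proof (rule AE_mp, intro AE_I2 impI)
    fix x assume "x \<in> space \<mu>" "Nrm x - Nrm x * Nrm x = 0"
    hence "Nrm x * (1 - Nrm x) = 0" by (simp add: algebra_simps)
    thus "x \<in> {x \<in> space \<mu>. Nrm x = 0 \<or> Nrm x = 1}" using \<open>x \<in> space \<mu>\<close> by auto
  qed
  hence "prob {x \<in> space \<mu>. Nrm x = 0 \<or> Nrm x = 1} = 1"
    using AE_in_set_eq_1[OF A_sets[OF S]] by simp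
  thus ?thesis unfolding A_eq[OF S] by (simp add: emeasure_eq_measure)
qed



lemma prodlist_meas:
  fixes F :: "'j \<Rightarrow> 'a \<Rightarrow> complex"
  assumes "\<And>j. F j \<in> borel_measurable M"
  shows "(\<lambda>x. prod_list (map (\<lambda>j. F j x) l)) \<in> borel_measurable M"
proof (induction l)
  case Nil thus ?case by simp
next
  case (Cons a l) thus ?case by (simp add: borel_measurable_times[OF assms Cons])
qed

lemma prodlist_norm:
  fixes F :: "'j \<Rightarrow> complex"
  shows "(\<And>j. j \<in> set l \<Longrightarrow> norm (F j) \<le> 1) \<Longrightarrow> norm (prod_list (map F l)) \<le> 1"
  by (induction l) (auto simp: norm_mult intro!: mult_le_one)

lemma cnj_meas: "cnj \<in> borel_measurable borel"
  by (intro borel_measurable_continuous_onI linear_continuous_on bounded_linear_cnj)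

lemma sum_le_Nrm:
  assumes "x \<in> l2" "finite F"
  shows "(\<Sum>m\<in>F. (cmod (x m))\<^sup>2) \<le> Nrm x"
  unfolding Nrm_def using assms unfolding l2_def by (intro finite_sum_le_infsum) auto

lemma ptw:
  fixes x :: "'i \<Rightarrow> complex"
  assumes x: "x \<in> l2" "Nrm x \<le> 1" and A: "x = (\<lambda>_. 0) \<or> Nrm x = 1" and F: "finite F"
    and ne: "is \<noteq> []"
  shows "norm (prod_list (map x is) * prod_list (map (\<lambda>j. cnj (x j)) js) *
           (complex_of_real (\<Sum>m\<in>F. (cmod (x m))\<^sup>2) - 1)) \<le> Nrm x - (\<Sum>m\<in>F. (cmod (x m))\<^sup>2)"
proof -
  let ?S = "(\<Sum>m\<in>F. (cmod (x m))\<^sup>2)"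
  have SN: "?S \<le> Nrm x" by (rule sum_le_Nrm[OF x(1) F])
  have S0: "0 \<le> ?S" by (intro sum_nonneg) auto
  show ?thesis
  proof (cases "x = (\<lambda>_. 0)")
    case True
    then obtain a t where "is = a # t" using ne by (cases "is") auto
    thus ?thesis using True SN by simp
  next
    case False
    hence N1: "Nrm x = 1" using A by auto
    have c: "cmod (x j) \<le> 1" for j
      using coord_le_l2norm[OF x(1), of j] N1 by (simp add: l2norm_Nrm)
    have "norm (prod_list (map x is)) \<le> 1" by (rule prodlist_norm) (use c in auto)
    moreover have "norm (prod_list (map (\<lambda>j. cnj (x j)) js)) \<le> 1" by (rule prodlist_norm) (use c in auto)
    ultimately have f1: "norm (prod_list (map x is) * prod_list (map (\<lambda>j. cnj (x j)) js)) \<le> 1"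
      by (simp add: norm_mult mult_le_one)
    have "norm (complex_of_real ?S - 1) = 1 - ?S"
    proof -
      have "complex_of_real ?S - 1 = complex_of_real (?S - 1)" by simp
      hence "norm (complex_of_real ?S - 1) = \<bar>?S - 1\<bar>" by (simp only: norm_of_real)
      thus ?thesis using SN N1 by simp
    qed
    hence "norm (prod_list (map x is) * prod_list (map (\<lambda>j. cnj (x j)) js) *
           (complex_of_real ?S - 1)) = norm (prod_list (map x is) * prod_list (map (\<lambda>j. cnj (x j)) js)) * (1 - ?S)"
      by (simp add: norm_mult)
    also have "\<dots> \<le> 1 * (1 - ?S)" using f1 SN N1 by (intro mult_right_mono) auto
    finally show ?thesis using N1 by simp
  qed
qed

lemma dmA:
  "dm_gamma \<mu> (is @ [m]) (js @ [m]) =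
    (\<integral>x. prod_list (map x is) * prod_list (map (\<lambda>j. cnj (x j)) js) * complex_of_real ((cmod (x m))\<^sup>2) \<partial>\<mu>)"
  unfolding dm_gamma_def by (simp del: of_real_power add: complex_norm_square mult_ac)

lemma backward:
  fixes \<mu> :: "('i::countable \<Rightarrow> complex) measure"
  assumes P: "prob_space \<mu>" and S: "sets \<mu> = sets borel_X1"
    and E: "emeasure \<mu> ({\<lambda>_. 0} \<union> unit_sphere) = 1" and k: "k \<ge> 1"
  shows "partial_trace_consistent \<mu> k"
proof -
  interpret prob_space \<mu> by fact
  let ?A = "{x \<in> space \<mu>. Nrm x = 0 \<or> Nrm x = 1}"
  have "emeasure \<mu> ?A = 1" using E A_eq[OF S] by simp
  hence "prob ?A = 1" by (simp add: emeasure_eq_measure)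
  hence AEA: "AE x in \<mu>. x \<in> ?A" using AE_in_set_eq_1[OF A_sets[OF S]] by simp
  have sp: "x \<in> space \<mu> \<Longrightarrow> x \<in> l2 \<and> Nrm x \<le> 1" for x
    using space_mu[OF S] unit_ball_Nrm unfolding unit_ball_def by auto
  have c1: "x \<in> space \<mu> \<Longrightarrow> cmod (x j) \<le> 1" for x j
    using sp[of x] coord_le_l2norm[of x j] unfolding l2norm_Nrm by (meson order_trans real_sqrt_le_1_iff)
  have Nm: "Nrm \<in> borel_measurable \<mu>" by (rule Nrm_meas[OF S])
  have intN: "integrable \<mu> Nrm"
    by (rule bounded_integrable[OF P Nm, where B=1]) (simp add: abs_of_nonneg[OF Nrm_nonneg] sp)
  have intg: "integrable \<mu> (\<lambda>x. (cmod (x m))\<^sup>2)" for m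
  proof (rule bounded_integrable[OF P sq_meas[OF S], where B=1])
    fix x assume "x \<in> space \<mu>"
    thus "norm ((cmod (x m))\<^sup>2) \<le> 1" using c1[of x m] by (simp add: power_le_one)
  qed
  have csum: "((\<lambda>m. \<integral>x. (cmod (x m))\<^sup>2 \<partial>\<mu>) has_sum (\<integral>x. Nrm x \<partial>\<mu>)) UNIV"
    using weighted_sum[OF P S, of "\<lambda>_. 1"] by simp
  show ?thesis unfolding partial_trace_consistent_def
  proof (intro allI impI)
    fix "is" js :: "'i list" assume len: "length is = k" "length js = k"
    hence ne: "is \<noteq> []" using k by auto
    define f where "f x = prod_list (map x is) * prod_list (map (\<lambda>j. cnj (x j)) js)" for x :: "'i \<Rightarrow> complex"
    have cm: "(\<lambda>x. x j) \<in> borel_measurable \<mu>" for j by (rule coord_meas_mu[OF S])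
    have fm: "f \<in> borel_measurable \<mu>"
      unfolding f_def
      by (intro borel_measurable_times prodlist_meas[of "\<lambda>j x. x j", OF cm]
                prodlist_meas[of "\<lambda>j x. cnj (x j)", OF measurable_compose[OF cm cnj_meas]])
    have fb: "x \<in> space \<mu> \<Longrightarrow> norm (f x) \<le> 1" for x
    proof -
      assume x: "x \<in> space \<mu>"
      have "norm (prod_list (map x is)) \<le> 1" by (rule prodlist_norm) (use c1[OF x] in auto)
      moreover have "norm (prod_list (map (\<lambda>j. cnj (x j)) js)) \<le> 1" by (rule prodlist_norm) (use c1[OF x] in auto)
      ultimately show ?thesis unfolding f_def by (simp add: norm_mult mult_le_one)
    qed
    have intf: "integrable \<mu> f" by (rule bounded_integrable[OF P fm fb])
    have ofm: "(\<lambda>x. complex_of_real ((cmod (x m))\<^sup>2)) \<in> borel_measurable \<mu>" for m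
      by (rule measurable_compose[OF sq_meas[OF S] borel_measurable_of_real])
    have intfg: "integrable \<mu> (\<lambda>x. f x * complex_of_real ((cmod (x m))\<^sup>2))" for m
    proof (rule bounded_integrable[OF P borel_measurable_times[OF fm ofm], where B=1])
      fix x assume x: "x \<in> space \<mu>"
      have "(cmod (x m))\<^sup>2 \<le> 1" using c1[OF x, of m] by (simp add: power_le_one)
      thus "norm (f x * complex_of_real ((cmod (x m))\<^sup>2)) \<le> 1"
        using fb[OF x] by (simp del: of_real_power add: norm_mult mult_le_one)
    qed
    define T where "T F = (\<Sum>m\<in>F. dm_gamma \<mu> (is @ [m]) (js @ [m]))" for F
    have T_eq: "T F = (\<integral>x. f x * complex_of_real (\<Sum>m\<in>F. (cmod (x m))\<^sup>2) \<partial>\<mu>)" if "finite F" for F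
    proof -
      have "T F = (\<Sum>m\<in>F. \<integral>x. f x * complex_of_real ((cmod (x m))\<^sup>2) \<partial>\<mu>)"
        unfolding T_def dmA f_def ..
      also have "\<dots> = (\<integral>x. (\<Sum>m\<in>F. f x * complex_of_real ((cmod (x m))\<^sup>2)) \<partial>\<mu>)"
        by (rule Bochner_Integration.integral_sum[symmetric]) (rule intfg)
      also have "\<dots> = (\<integral>x. f x * complex_of_real (\<Sum>m\<in>F. (cmod (x m))\<^sup>2) \<partial>\<mu>)"
        by (simp add: sum_distrib_left)
      finally show ?thesis .
    qed
    have bound: "norm (T F - dm_gamma \<mu> is js) \<le> (\<integral>x. Nrm x \<partial>\<mu>) - (\<Sum>m\<in>F. \<integral>x. (cmod (x m))\<^sup>2 \<partial>\<mu>)"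
      if F: "finite F" for F
    proof -
      let ?S = "\<lambda>x. \<Sum>m\<in>F. (cmod (x m))\<^sup>2"
      have intfS: "integrable \<mu> (\<lambda>x. f x * complex_of_real (?S x))"
        using intfg by (simp add: sum_distrib_left)
      have dmf: "dm_gamma \<mu> is js = (\<integral>x. f x \<partial>\<mu>)" unfolding dm_gamma_def f_def ..
      have "T F - dm_gamma \<mu> is js = (\<integral>x. f x * complex_of_real (?S x) - f x \<partial>\<mu>)"
        unfolding T_eq[OF F] dmf by (rule Bochner_Integration.integral_diff[symmetric, OF intfS intf])
      also have "\<dots> = (\<integral>x. f x * (complex_of_real (?S x) - 1) \<partial>\<mu>)"
        by (simp add: right_diff_distrib)
      finally have eqT: "T F - dm_gamma \<mu> is js = (\<integral>x. f x * (complex_of_real (?S x) - 1) \<partial>\<mu>)" .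
      have "norm (T F - dm_gamma \<mu> is js) \<le> (\<integral>x. norm (f x * (complex_of_real (?S x) - 1)) \<partial>\<mu>)"
        unfolding eqT by (rule integral_norm_bound)
      also have "\<dots> \<le> (\<integral>x. Nrm x - ?S x \<partial>\<mu>)"
      proof (rule integral_mono_AE)
        have "integrable \<mu> (\<lambda>x. f x * complex_of_real (?S x) - f x)"
          by (rule Bochner_Integration.integrable_diff[OF intfS intf])
        hence "integrable \<mu> (\<lambda>x. f x * (complex_of_real (?S x) - 1))"
          by (simp add: right_diff_distrib)
        thus "integrable \<mu> (\<lambda>x. norm (f x * (complex_of_real (?S x) - 1)))"
          by (rule integrable_norm)
        show "integrable \<mu> (\<lambda>x. Nrm x - ?S x)"
          by (intro Bochner_Integration.integrable_diff intN Bochner_Integration.integrable_sum intg)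
        show "AE x in \<mu>. norm (f x * (complex_of_real (?S x) - 1)) \<le> Nrm x - ?S x"
          using AEA
        proof (rule AE_mp, intro AE_I2 impI)
          fix x assume x: "x \<in> space \<mu>" and xA: "x \<in> ?A"
          have xl: "x \<in> l2" and xN: "Nrm x \<le> 1" using sp[OF x] by auto
          have d: "x = (\<lambda>_. 0) \<or> Nrm x = 1" using xA Nrm_zero_iff[OF xl] by auto
          show "norm (f x * (complex_of_real (?S x) - 1)) \<le> Nrm x - ?S x"
            unfolding f_def by (rule ptw[OF xl xN d F ne])
        qed
      qed
      also have "\<dots> = (\<integral>x. Nrm x \<partial>\<mu>) - (\<Sum>m\<in>F. \<integral>x. (cmod (x m))\<^sup>2 \<partial>\<mu>)"
        by (simp add: Bochner_Integration.integral_diff[OF intN Bochner_Integration.integrable_sum[OF intg]]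
                      Bochner_Integration.integral_sum[OF intg])
      finally show ?thesis .
    qed
    have lim: "((\<lambda>F. (\<integral>x. Nrm x \<partial>\<mu>) - (\<Sum>m\<in>F. \<integral>x. (cmod (x m))\<^sup>2 \<partial>\<mu>)) \<longlongrightarrow> 0)
               (finite_subsets_at_top UNIV)"
      using tendsto_diff[OF tendsto_const csum[unfolded has_sum_def], of "\<integral>x. Nrm x \<partial>\<mu>"] by simp
    have "((\<lambda>F. T F - dm_gamma \<mu> is js) \<longlongrightarrow> 0) (finite_subsets_at_top UNIV)"
      by (rule Lim_null_comparison[OF eventually_finite_subsets_at_top_weakI lim]) (rule bound)
    hence "(T \<longlongrightarrow> dm_gamma \<mu> is js) (finite_subsets_at_top UNIV)"
      by (rule LIM_zero_cancel)
    thus "((\<lambda>m. dm_gamma \<mu> (is @ [m]) (js @ [m])) has_sum dm_gamma \<mu> is js) UNIV"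
      unfolding has_sum_def T_def .
  qed
qed


theorem mainTheorem9:
  fixes \<mu> :: "('i::countable \<Rightarrow> complex) measure"
  assumes "prob_space \<mu>"
    and "sets \<mu> = sets borel_X1"
    and "U1_invariant \<mu>"
  shows "(\<forall>k\<ge>1. partial_trace_consistent \<mu> k) \<longleftrightarrow>
         emeasure \<mu> ({\<lambda>_. 0} \<union> unit_sphere) = 1"
proof
  assume "\<forall>k\<ge>1. partial_trace_consistent \<mu> k"
  hence "partial_trace_consistent \<mu> 1" by simp
  thus "emeasure \<mu> ({\<lambda>_. 0} \<union> unit_sphere) = 1" by (rule forward[OF assms(1,2)])
next
  assume "emeasure \<mu> ({\<lambda>_. 0} \<union> unit_sphere) = 1"
  thus "\<forall>k\<ge>1. partial_trace_consistent \<mu> k" using backward[OF assms(1,2)] by blast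
qed

end
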